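(* Consider a symmetric instance with $n$ actions, nonnegative sender values, and $2\le k\le n$. Let $\varphi^*_n$ be an optimal direct, persuasive scheme with $n$ signals that is symmetric (with $k=n$); such a scheme exists. The Imitation Scheme $\varphi_{Imi}$ is symmetric, direct and persuasive (with $k$ signals), and $u_{\mathcal S}(\varphi_{Imi})\ge\frac kn\operatorname{OPT}_n$. Moreover, for all $2\le k\le n$ there exists a random-order instance (a single vector of $n$ types, uniformly randomly permuted) with $\operatorname{OPT}_k\le\frac kn\operatorname{OPT}_n$.
   Context: Model: receiver chooses one of actions $[n]$; each action has a type; state $\boldsymbol\theta$ drawn from a known distribution $q$; each type $t$ has receiver value $\rho(t)$ and sender value $\xi(t)$ (here $\xi\ge0$). A scheme with $k$ signals maps states to distributions over $k$ signals; the receiver best-responds to her posterior, ties in favor of the sender. $\operatorname{OPT}_k$ is the maximal sender expected utility over schemes with $k$ signals. Direct: each signal recommends an action; persuasive: for each signal sent with positive probability recommending $i$, $\mathbb E[\rho(\theta_i)\mid\sigma]\ge\mathbb E[\rho(\theta_j)\mid\sigma]$ for all $j$. Symmetric instance: $q_{\boldsymbol\theta}=q_{\boldsymbol\theta'}$ whenever $\boldsymbol\theta'$ is a permutation of $\boldsymbol\theta$. With $(\pi\cdot\boldsymbol\theta)_{\pi(l)}=\theta_l$, a scheme with $k$ signals is symmetric if it is direct, recommends actions $1,\dots,k$, and $\varphi(\pi\cdot\boldsymbol\theta,\pi(i))=\varphi(\boldsymbol\theta,i)$ for all states, $i\in[k]$, and permutations $\pi$ of $[n]$ with $\pi([k])=[k]$.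 Imitation Scheme: given $\boldsymbol\theta$, draw action $i$ from $\varphi^*_n(\boldsymbol\theta,\cdot)$; if $i\in[k]$ recommend $i$, otherwise recommend an action drawn uniformly at random from $[k]$. *)

theory Defs
  imports "HOL-Probability.Probability" "HOL-Combinatorics.Permutations"
begin

text \<open>States are vectors theta :: nat => 'a of types, only theta 0, ..., theta (n-1) matter
  (actions are 0..n-1). q is the prior over states (a pmf with finite support).\<close>

definition symmetric_instance :: "nat \<Rightarrow> (nat \<Rightarrow> 'a) pmf \<Rightarrow> bool" where
  "symmetric_instance n q \<longleftrightarrow> finite (set_pmf q) \<and>
     (\<forall>\<theta> \<pi>. \<pi> permutes {..<n} \<longrightarrow> pmf q (\<theta> \<circ> inv \<pi>) = pmf q \<theta>)"

definition is_scheme :: "nat \<Rightarrow> ((nat \<Rightarrow> 'a) \<Rightarrow> nat pmf) \<Rightarrow> bool" where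
  "is_scheme k \<phi> \<longleftrightarrow> (\<forall>\<theta>. set_pmf (\<phi> \<theta>) \<subseteq> {..<k})"

definition sig_prob :: "(nat \<Rightarrow> 'a) pmf \<Rightarrow> ((nat \<Rightarrow> 'a) \<Rightarrow> nat pmf) \<Rightarrow> nat \<Rightarrow> real" where
  "sig_prob q \<phi> s = measure_pmf.expectation q (\<lambda>\<theta>. pmf (\<phi> \<theta>) s)"

text \<open>Unnormalised posterior expectation of f(theta_i) given signal s
  (i.e. Pr[s] * E[f(theta_i) | s]).\<close>
definition post_val :: "(nat \<Rightarrow> 'a) pmf \<Rightarrow> ('a \<Rightarrow> real) \<Rightarrow> ((nat \<Rightarrow> 'a) \<Rightarrow> nat pmf) \<Rightarrow> nat \<Rightarrow> nat \<Rightarrow> real" where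
  "post_val q f \<phi> s i = measure_pmf.expectation q (\<lambda>\<theta>. pmf (\<phi> \<theta>) s * f (\<theta> i))"

definition best_resp :: "nat \<Rightarrow> (nat \<Rightarrow> 'a) pmf \<Rightarrow> ('a \<Rightarrow> real) \<Rightarrow> ((nat \<Rightarrow> 'a) \<Rightarrow> nat pmf) \<Rightarrow> nat \<Rightarrow> nat set" where
  "best_resp n q \<rho> \<phi> s = {i. i < n \<and> (\<forall>j<n. post_val q \<rho> \<phi> s j \<le> post_val q \<rho> \<phi> s i)}"

text \<open>Sender expected utility of a scheme with k signals; the receiver best-responds,
  ties broken in favour of the sender.\<close>
definition sender_util :: "nat \<Rightarrow> nat \<Rightarrow> (nat \<Rightarrow> 'a) pmf \<Rightarrow> ('a \<Rightarrow> real) \<Rightarrow> ('a \<Rightarrow> real) \<Rightarrow> ((nat \<Rightarrow> 'a) \<Rightarrow> nat pmf) \<Rightarrow> real" where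
  "sender_util n k q \<rho> \<xi> \<phi> = (\<Sum>s<k. Max (post_val q \<xi> \<phi> s ` best_resp n q \<rho> \<phi> s))"

definition OPT :: "nat \<Rightarrow> nat \<Rightarrow> (nat \<Rightarrow> 'a) pmf \<Rightarrow> ('a \<Rightarrow> real) \<Rightarrow> ('a \<Rightarrow> real) \<Rightarrow> real" where
  "OPT n k q \<rho> \<xi> = (SUP \<phi>\<in>{\<phi>. is_scheme k \<phi>}. sender_util n k q \<rho> \<xi> \<phi>)"

text \<open>Direct scheme with k signals: signal i recommends action i (i < k <= n).\<close>
definition direct :: "nat \<Rightarrow> nat \<Rightarrow> ((nat \<Rightarrow> 'a) \<Rightarrow> nat pmf) \<Rightarrow> bool" where
  "direct n k \<phi> \<longleftrightarrow> k \<le> n \<and> is_scheme k \<phi>"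

definition persuasive :: "nat \<Rightarrow> nat \<Rightarrow> (nat \<Rightarrow> 'a) pmf \<Rightarrow> ('a \<Rightarrow> real) \<Rightarrow> ((nat \<Rightarrow> 'a) \<Rightarrow> nat pmf) \<Rightarrow> bool" where
  "persuasive n k q \<rho> \<phi> \<longleftrightarrow> (\<forall>i<k. sig_prob q \<phi> i > 0 \<longrightarrow>
      (\<forall>j<n. post_val q \<rho> \<phi> i j \<le> post_val q \<rho> \<phi> i i))"

definition symmetric_scheme :: "nat \<Rightarrow> nat \<Rightarrow> ((nat \<Rightarrow> 'a) \<Rightarrow> nat pmf) \<Rightarrow> bool" where
  "symmetric_scheme n k \<phi> \<longleftrightarrow> direct n k \<phi> \<and>
     (\<forall>\<theta> \<pi> i. \<pi> permutes {..<n} \<and> \<pi> ` {..<k} = {..<k} \<and> i < k \<longrightarrow>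
        pmf (\<phi> (\<theta> \<circ> inv \<pi>)) (\<pi> i) = pmf (\<phi> \<theta>) i)"

definition imitation :: "nat \<Rightarrow> ((nat \<Rightarrow> 'a) \<Rightarrow> nat pmf) \<Rightarrow> (nat \<Rightarrow> 'a) \<Rightarrow> nat pmf" where
  "imitation k \<phi> \<theta> = bind_pmf (\<phi> \<theta>) (\<lambda>i. if i < k then return_pmf i else pmf_of_set {..<k})"

definition random_order :: "nat \<Rightarrow> (nat \<Rightarrow> 'a) \<Rightarrow> (nat \<Rightarrow> 'a) pmf" where
  "random_order n t = map_pmf (\<lambda>\<pi>. t \<circ> inv \<pi>) (pmf_of_set {\<pi>. \<pi> permutes {..<n}})"

end

theory Submission
  imports Defs
begin


lemma expect_fin:
  assumes "finite (set_pmf q)"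
  shows "measure_pmf.expectation q g = (\<Sum>\<theta>\<in>set_pmf q. pmf q \<theta> * g \<theta>)"
  by (subst integral_measure_pmf_real[of "set_pmf q"]) (auto simp: assms mult.commute)

lemma sym_pmf:
  assumes "symmetric_instance n q" "\<pi> permutes {..<n}"
  shows "pmf q (\<theta> \<circ> \<pi>) = pmf q \<theta>"
proof -
  have "inv \<pi> permutes {..<n}" using assms(2) by (rule permutes_inv)
  then have "pmf q (\<theta> \<circ> inv (inv \<pi>)) = pmf q \<theta>" using assms(1) unfolding symmetric_instance_def by blast
  then show ?thesis using permutes_inv_inv[OF assms(2)] by simp
qed

lemma sym_sum:
  assumes "symmetric_instance n q" "\<pi> permutes {..<n}"
  shows "(\<Sum>\<theta>\<in>set_pmf q. pmf q \<theta> * g \<theta>) = (\<Sum>\<theta>\<in>set_pmf q. pmf q \<theta> * g (\<theta> \<circ> \<pi>))"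
proof -
  let ?h = "\<lambda>\<theta>. \<theta> \<circ> \<pi>"
  have ip: "inv \<pi> permutes {..<n}" using assms(2) by (rule permutes_inv)
  have bij: "bij_betw ?h (set_pmf q) (set_pmf q)"
  proof (rule bij_betwI[where g="\<lambda>\<theta>. \<theta> \<circ> inv \<pi>"])
    show "?h \<in> set_pmf q \<rightarrow> set_pmf q" using sym_pmf[OF assms] by (auto simp: set_pmf_iff)
    show "(\<lambda>\<theta>. \<theta> \<circ> inv \<pi>) \<in> set_pmf q \<rightarrow> set_pmf q" using sym_pmf[OF assms(1) ip] by (auto simp: set_pmf_iff)
    show "\<theta> \<circ> \<pi> \<circ> inv \<pi> = \<theta>" for \<theta> by (simp add: o_assoc[symmetric] permutes_inv_o[OF assms(2)])
    show "\<theta> \<circ> inv \<pi> \<circ> \<pi> = \<theta>" for \<theta> by (simp add: o_assoc[symmetric] permutes_inv_o[OF assms(2)])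
  qed
  have "(\<Sum>\<theta>\<in>set_pmf q. pmf q \<theta> * g \<theta>) = (\<Sum>\<theta>\<in>set_pmf q. pmf q (?h \<theta>) * g (?h \<theta>))"
    using sum.reindex_bij_betw[OF bij, of "\<lambda>\<theta>. pmf q \<theta> * g \<theta>"] by simp
  also have "\<dots> = (\<Sum>\<theta>\<in>set_pmf q. pmf q \<theta> * g (\<theta> \<circ> \<pi>))" using sym_pmf[OF assms] by simp
  finally show ?thesis .
qed

lemma embed_lemma:
  fixes f :: "nat \<Rightarrow> real"
  assumes "\<forall>i. 0 \<le> f i" "\<forall>i\<ge>n. f i = 0" "(\<Sum>i<n. f i) = 1"
  shows "pmf (embed_pmf f) = f" "set_pmf (embed_pmf f) \<subseteq> {..<n}"
proof -
  have "(\<integral>\<^sup>+i. ennreal (f i) \<partial>count_space UNIV) = (\<Sum>i<n. ennreal (f i))"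
    by (rule nn_integral_count_space') (use assms in auto)
  also have "\<dots> = 1" using assms by (simp add: sum_ennreal)
  finally have "(\<integral>\<^sup>+i. ennreal (f i) \<partial>count_space UNIV) = 1" .
  then show p: "pmf (embed_pmf f) = f" using assms(1) by (simp add: fun_eq_iff pmf_embed_pmf)
  show "set_pmf (embed_pmf f) \<subseteq> {..<n}" using assms(2) by (auto simp: set_pmf_iff p not_less[symmetric])
qed



definition PV :: "(nat \<Rightarrow> 'a) pmf \<Rightarrow> ('a \<Rightarrow> real) \<Rightarrow> ((nat \<Rightarrow> 'a) \<times> nat \<Rightarrow> real) \<Rightarrow> nat \<Rightarrow> nat \<Rightarrow> real" where
  "PV q f x s j = (\<Sum>\<theta>\<in>set_pmf q. pmf q \<theta> * (x (\<theta>,s) * f (\<theta> j)))"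

definition obj :: "nat \<Rightarrow> (nat \<Rightarrow> 'a) pmf \<Rightarrow> ('a \<Rightarrow> real) \<Rightarrow> ((nat \<Rightarrow> 'a) \<times> nat \<Rightarrow> real) \<Rightarrow> real" where
  "obj n q \<xi> x = (\<Sum>s<n. PV q \<xi> x s s)"

definition Dset :: "nat \<Rightarrow> (nat \<Rightarrow> 'a) pmf \<Rightarrow> ('a \<Rightarrow> real) \<Rightarrow> ((nat \<Rightarrow> 'a) \<times> nat \<Rightarrow> real) set" where
  "Dset n q \<rho> = {x. (\<forall>\<theta> i. 0 \<le> x (\<theta>,i) \<and> x (\<theta>,i) \<le> 1) \<and> (\<forall>\<theta> i. x (\<theta>, n + i) = 0) \<and>
      (\<forall>\<theta>. (\<Sum>i<n. x (\<theta>,i)) = 1) \<and> (\<forall>i j. i < n \<and> j < n \<longrightarrow> PV q \<rho> x i j \<le> PV q \<rho> x i i)}"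

lemma Dset_ge: "x \<in> Dset n q \<rho> \<Longrightarrow> n \<le> i \<Longrightarrow> x (\<theta>, i) = 0"
  unfolding Dset_def by (metis (mono_tags, lifting) le_Suc_ex mem_Collect_eq)

lemma open_Collect_const': "open {x. P}" by (cases P) auto

lemma cont_PV: "continuous_on UNIV (\<lambda>x. PV q f x s j)"
  unfolding PV_def by (intro continuous_intros continuous_on_product_coordinates)

lemma compact_Dset: "compact (Dset n q \<rho>)"
proof -
  have K: "compact (PiE UNIV (\<lambda>_::((nat \<Rightarrow> 'a) \<times> nat). {0..1::real}))"
    using compactin_PiE[of "\<lambda>_. euclidean" UNIV "\<lambda>_::((nat \<Rightarrow> 'a) \<times> nat). {0..1::real}"]
    by (simp add: euclidean_product_topology compactin_euclidean_iff)
  have C: "closed {x::((nat \<Rightarrow> 'a) \<times> nat \<Rightarrow> real). (\<forall>\<theta> i. x (\<theta>, n + i) = 0) \<and>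
      (\<forall>\<theta>. (\<Sum>i<n. x (\<theta>,i)) = 1) \<and> (\<forall>i j. i < n \<and> j < n \<longrightarrow> PV q \<rho> x i j \<le> PV q \<rho> x i i)}"
    by (intro closed_Collect_conj closed_Collect_all closed_Collect_eq closed_Collect_imp
        closed_Collect_le open_Collect_const' cont_PV continuous_intros continuous_on_product_coordinates)
  have "Dset n q \<rho> = PiE UNIV (\<lambda>_. {0..1}) \<inter> {x. (\<forall>\<theta> i. x (\<theta>, n + i) = 0) \<and>
      (\<forall>\<theta>. (\<Sum>i<n. x (\<theta>,i)) = 1) \<and> (\<forall>i j. i < n \<and> j < n \<longrightarrow> PV q \<rho> x i j \<le> PV q \<rho> x i i)}"
    unfolding Dset_def by (auto simp: PiE_iff)
  then show ?thesis using K C by (simp add: compact_Int_closed)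
qed

lemma cont_obj: "continuous_on UNIV (obj n q \<xi>)"
  unfolding obj_def by (intro continuous_intros cont_PV)

lemma revelation:
  assumes fin: "finite (set_pmf q)" and n: "0 < n" and sch: "is_scheme n \<psi>"
  shows "\<exists>x\<in>Dset n q \<rho>. sender_util n n q \<rho> \<xi> \<psi> = obj n q \<xi> x"
proof -
  have pv: "post_val q f \<psi> s j = (\<Sum>\<theta>\<in>set_pmf q. pmf q \<theta> * (pmf (\<psi> \<theta>) s * f (\<theta> j)))" for f s j
    unfolding post_val_def by (rule expect_fin[OF fin])
  have ne: "best_resp n q \<rho> \<psi> s \<noteq> {}" for s
  proof -
    let ?g = "\<lambda>j. post_val q \<rho> \<psi> s j"
    have "Max (?g ` {..<n}) \<in> ?g ` {..<n}" using n by (intro Max_in) auto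
    then obtain j0 where "j0 < n" "?g j0 = Max (?g ` {..<n})" by auto
    moreover have "\<forall>j<n. ?g j \<le> Max (?g ` {..<n})" by (auto intro: Max_ge)
    ultimately have "j0 \<in> best_resp n q \<rho> \<psi> s" unfolding best_resp_def by auto
    then show ?thesis by auto
  qed
  have fb: "finite (best_resp n q \<rho> \<psi> s)" for s
    by (rule finite_subset[of _ "{..<n}"]) (auto simp: best_resp_def)
  have "\<forall>s. \<exists>a. a \<in> best_resp n q \<rho> \<psi> s \<and>
      post_val q \<xi> \<psi> s a = Max (post_val q \<xi> \<psi> s ` best_resp n q \<rho> \<psi> s)"
  proof
    fix s
    have "Max (post_val q \<xi> \<psi> s ` best_resp n q \<rho> \<psi> s) \<in> post_val q \<xi> \<psi> s ` best_resp n q \<rho> \<psi> s"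
      using ne fb by (intro Max_in) auto
    then show "\<exists>a. a \<in> best_resp n q \<rho> \<psi> s \<and>
      post_val q \<xi> \<psi> s a = Max (post_val q \<xi> \<psi> s ` best_resp n q \<rho> \<psi> s)" by auto
  qed
  then obtain a where a: "\<And>s. a s \<in> best_resp n q \<rho> \<psi> s"
    "\<And>s. post_val q \<xi> \<psi> s (a s) = Max (post_val q \<xi> \<psi> s ` best_resp n q \<rho> \<psi> s)" by metis
  have an: "a s < n" for s using a(1)[of s] by (auto simp: best_resp_def)
  define x where "x = (\<lambda>(\<theta>,i). \<Sum>s\<in>{s. s \<in> {..<n} \<and> a s = i}. pmf (\<psi> \<theta>) s)"
  have x: "x (\<theta>,i) = (\<Sum>s\<in>{s. s \<in> {..<n} \<and> a s = i}. pmf (\<psi> \<theta>) s)" for \<theta> i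
    by (simp add: x_def)
  have sum1: "(\<Sum>s<n. pmf (\<psi> \<theta>) s) = 1" for \<theta>
    using sch by (intro sum_pmf_eq_1) (auto simp: is_scheme_def)
  have sumx: "(\<Sum>i<n. x (\<theta>,i)) = 1" for \<theta>
    unfolding x using sum.group[of "{..<n}" "{..<n}" a "\<lambda>s. pmf (\<psi> \<theta>) s"] an sum1 by auto
  have PVx: "PV q f x i j = (\<Sum>s\<in>{s. s \<in> {..<n} \<and> a s = i}. post_val q f \<psi> s j)" for f i j
    unfolding PV_def x pv sum_distrib_left sum_distrib_right
    by (subst sum.swap) (simp add: algebra_simps)
  have "x \<in> Dset n q \<rho>"
    unfolding Dset_def
  proof (intro CollectI conjI allI impI)
    fix \<theta> i
    show "0 \<le> x (\<theta>, i)" unfolding x by (intro sum_nonneg) auto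
    have "x (\<theta>, i) \<le> (\<Sum>s<n. pmf (\<psi> \<theta>) s)" unfolding x by (intro sum_mono2) auto
    then show "x (\<theta>, i) \<le> 1" using sum1 by simp
    show "x (\<theta>, n + i) = 0" unfolding x using an by (auto intro!: sum.neutral) (metis not_add_less1)
    show "(\<Sum>i<n. x (\<theta>, i)) = 1" by (rule sumx)
  next
    fix i j assume ij: "i < n \<and> j < n"
    show "PV q \<rho> x i j \<le> PV q \<rho> x i i" unfolding PVx
    proof (intro sum_mono)
      fix s assume "s \<in> {s. s \<in> {..<n} \<and> a s = i}"
      then show "post_val q \<rho> \<psi> s j \<le> post_val q \<rho> \<psi> s i"
        using a(1)[of s] ij by (auto simp: best_resp_def)
    qed
  qed
  moreover have "sender_util n n q \<rho> \<xi> \<psi> = obj n q \<xi> x"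
  proof -
    have "obj n q \<xi> x = (\<Sum>i<n. \<Sum>s\<in>{s. s \<in> {..<n} \<and> a s = i}. post_val q \<xi> \<psi> s (a s))"
      unfolding obj_def PVx by (intro sum.cong refl) auto
    also have "\<dots> = (\<Sum>s<n. post_val q \<xi> \<psi> s (a s))"
      using sum.group[of "{..<n}" "{..<n}" a "\<lambda>s. post_val q \<xi> \<psi> s (a s)"] an by auto
    finally show ?thesis unfolding sender_util_def a(2) by simp
  qed
  ultimately show ?thesis by blast
qed



lemma PV_perm:
  assumes sym: "symmetric_instance n q" and p: "\<pi> permutes {..<n}"
  shows "(\<Sum>\<theta>\<in>set_pmf q. pmf q \<theta> * (x (\<theta> \<circ> \<pi>, inv \<pi> i) * f (\<theta> j))) = PV q f x (inv \<pi> i) (inv \<pi> j)"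
proof -
  have ip: "inv \<pi> permutes {..<n}" using p by (rule permutes_inv)
  have e: "\<theta> \<circ> inv \<pi> \<circ> \<pi> = \<theta>" for \<theta> :: "nat \<Rightarrow> 'a"
    by (simp add: o_assoc[symmetric] permutes_inv_o[OF p])
  show ?thesis
    unfolding PV_def using sym_sum[OF sym ip, of "\<lambda>\<theta>. x (\<theta> \<circ> \<pi>, inv \<pi> i) * f (\<theta> j)"]
    by (simp add: e)
qed

lemma symmetrize:
  assumes sym: "symmetric_instance n q" and xD: "x \<in> Dset n q \<rho>"
  defines "P \<equiv> {\<pi>. \<pi> permutes {..<n}}"
  defines "x' \<equiv> (\<lambda>(\<theta>,i). (\<Sum>\<pi>\<in>P. x (\<theta> \<circ> \<pi>, inv \<pi> i)) / card P)"
  shows "x' \<in> Dset n q \<rho>" "obj n q \<xi> x' = obj n q \<xi> x"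
    "\<And>\<theta> \<sigma> i. \<sigma> permutes {..<n} \<Longrightarrow> x' (\<theta> \<circ> inv \<sigma>, \<sigma> i) = x' (\<theta>, i)"
proof -
  have fP: "finite P" unfolding P_def by (rule finite_permutations) simp
  have "id \<in> P" unfolding P_def by (simp add: permutes_id)
  then have cP: "0 < card P" using fP card_gt_0_iff by blast
  have x': "x' (\<theta>,i) = (\<Sum>\<pi>\<in>P. x (\<theta> \<circ> \<pi>, inv \<pi> i)) / card P" for \<theta> i by (simp add: x'_def)
  have xb: "0 \<le> x (\<theta>,i)" "x (\<theta>,i) \<le> 1" for \<theta> i using xD unfolding Dset_def by auto
  have xs: "(\<Sum>i<n. x (\<theta>,i)) = 1" for \<theta> using xD unfolding Dset_def by auto
  have xp: "i < n \<Longrightarrow> j < n \<Longrightarrow> PV q \<rho> x i j \<le> PV q \<rho> x i i" for i j using xD unfolding Dset_def by auto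
  have PVa: "PV q f x' i j = (\<Sum>\<pi>\<in>P. PV q f x (inv \<pi> i) (inv \<pi> j)) / card P" for f i j
  proof -
    have "PV q f x' i j = (\<Sum>\<pi>\<in>P. \<Sum>\<theta>\<in>set_pmf q. pmf q \<theta> * (x (\<theta> \<circ> \<pi>, inv \<pi> i) * f (\<theta> j))) / card P"
      unfolding PV_def x' sum_divide_distrib sum_distrib_left sum_distrib_right
      by (subst sum.swap) (simp add: algebra_simps)
    also have "\<dots> = (\<Sum>\<pi>\<in>P. PV q f x (inv \<pi> i) (inv \<pi> j)) / card P"
      by (intro arg_cong[where f="\<lambda>t. t / _"] sum.cong refl PV_perm[OF sym]) (auto simp: P_def)
    finally show ?thesis .
  qed
  show "x' \<in> Dset n q \<rho>"
    unfolding Dset_def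
  proof (intro CollectI conjI allI impI)
    fix \<theta> i
    show "0 \<le> x' (\<theta>, i)" unfolding x' using xb by (intro divide_nonneg_nonneg sum_nonneg) auto
    have "(\<Sum>\<pi>\<in>P. x (\<theta> \<circ> \<pi>, inv \<pi> i)) \<le> (\<Sum>\<pi>\<in>P. 1)" using xb by (intro sum_mono) auto
    then show "x' (\<theta>, i) \<le> 1" unfolding x' using cP by (simp add: divide_le_eq)
    have "inv \<pi> (n + i) = n + i" if "\<pi> \<in> P" for \<pi>
      using permutes_inv[of \<pi> "{..<n}"] that by (auto simp: P_def intro: permutes_not_in)
    then show "x' (\<theta>, n + i) = 0" unfolding x' using xD unfolding Dset_def by auto
  next
    fix \<theta>
    have "(\<Sum>i<n. x (\<theta> \<circ> \<pi>, inv \<pi> i)) = 1" if "\<pi> \<in> P" for \<pi>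
    proof -
      have "inv \<pi> permutes {..<n}" using that by (auto simp: P_def intro: permutes_inv)
      from sum.permute[OF this, of "\<lambda>i. x (\<theta> \<circ> \<pi>, i)"] show ?thesis using xs by (simp add: o_def)
    qed
    then show "(\<Sum>i<n. x' (\<theta>, i)) = 1" unfolding x' sum_divide_distrib[symmetric]
      using cP by (subst sum.swap) simp
  next
    fix i j assume ij: "i < n \<and> j < n"
    show "PV q \<rho> x' i j \<le> PV q \<rho> x' i i" unfolding PVa
      using cP
    proof (intro divide_right_mono sum_mono)
      fix \<pi> assume "\<pi> \<in> P"
      then have "inv \<pi> permutes {..<n}" by (auto simp: P_def intro: permutes_inv)
      then have "inv \<pi> i < n" "inv \<pi> j < n" using ij permutes_in_image by fastforce+
      then show "PV q \<rho> x (inv \<pi> i) (inv \<pi> j) \<le> PV q \<rho> x (inv \<pi> i) (inv \<pi> i)" by (rule xp)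
    qed simp
  qed
  show "obj n q \<xi> x' = obj n q \<xi> x"
  proof -
    have "obj n q \<xi> x' = (\<Sum>\<pi>\<in>P. \<Sum>s<n. PV q \<xi> x (inv \<pi> s) (inv \<pi> s)) / card P"
      unfolding obj_def PVa sum_divide_distrib[symmetric] by (subst sum.swap) simp
    also have "\<dots> = (\<Sum>\<pi>\<in>P. obj n q \<xi> x) / card P"
    proof (intro arg_cong[where f="\<lambda>t. t / _"] sum.cong refl)
      fix \<pi> assume "\<pi> \<in> P"
      then have "inv \<pi> permutes {..<n}" by (auto simp: P_def intro: permutes_inv)
      from sum.permute[OF this, of "\<lambda>s. PV q \<xi> x s s"] show "(\<Sum>s<n. PV q \<xi> x (inv \<pi> s) (inv \<pi> s)) = obj n q \<xi> x"
        by (simp add: obj_def o_def)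
    qed
    also have "\<dots> = obj n q \<xi> x" using cP by simp
    finally show ?thesis .
  qed
  fix \<theta> \<sigma> i assume s: "\<sigma> permutes {..<n}"
  have "(\<Sum>\<pi>\<in>P. x (\<theta> \<circ> inv \<sigma> \<circ> \<pi>, inv \<pi> (\<sigma> i))) = (\<Sum>\<pi>\<in>P. x (\<theta> \<circ> inv \<sigma> \<circ> (\<sigma> \<circ> \<pi>), inv (\<sigma> \<circ> \<pi>) (\<sigma> i)))"
    unfolding P_def by (rule setum_permutations_compose_left[OF s])
  also have "\<dots> = (\<Sum>\<pi>\<in>P. x (\<theta> \<circ> \<pi>, inv \<pi> i))"
  proof (intro sum.cong refl)
    fix \<pi> assume "\<pi> \<in> P"
    then have p: "\<pi> permutes {..<n}" by (simp add: P_def)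
    have "inv (\<sigma> \<circ> \<pi>) = inv \<pi> \<circ> inv \<sigma>"
      by (rule o_inv_distrib) (use s p in \<open>auto intro: permutes_bij\<close>)
    moreover have "\<theta> \<circ> inv \<sigma> \<circ> (\<sigma> \<circ> \<pi>) = \<theta> \<circ> \<pi>"
      by (metis comp_assoc comp_id permutes_inv_o(2) s)
    ultimately show "x (\<theta> \<circ> inv \<sigma> \<circ> (\<sigma> \<circ> \<pi>), inv (\<sigma> \<circ> \<pi>) (\<sigma> i)) = x (\<theta> \<circ> \<pi>, inv \<pi> i)"
      by (simp add: permutes_inverses(2)[OF s])
  qed
  finally show "x' (\<theta> \<circ> inv \<sigma>, \<sigma> i) = x' (\<theta>, i)" unfolding x' by simp
qed



lemma part1:
  assumes sym: "symmetric_instance n q" and n: "0 < n"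
  shows "\<exists>\<phi>. symmetric_scheme n n \<phi> \<and> persuasive n n q \<rho> \<phi> \<and>
              sender_util n n q \<rho> \<xi> \<phi> = OPT n n q \<rho> \<xi>"
proof -
  have fin: "finite (set_pmf q)" using sym by (simp add: symmetric_instance_def)
  have sch0: "is_scheme n (\<lambda>_. return_pmf 0)" using n by (simp add: is_scheme_def)
  have "Dset n q \<rho> \<noteq> {}" using revelation[OF fin n sch0, of \<rho> \<xi>] by blast
  then obtain x0 where x0: "x0 \<in> Dset n q \<rho>" "\<And>y. y \<in> Dset n q \<rho> \<Longrightarrow> obj n q \<xi> y \<le> obj n q \<xi> x0"
    using continuous_attains_sup[OF compact_Dset[of n q \<rho>] _ continuous_on_subset[OF cont_obj[of n q \<xi>]]]
    by blast
  have bound: "sender_util n n q \<rho> \<xi> \<psi> \<le> obj n q \<xi> x0" if "is_scheme n \<psi>" for \<psi>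
    using revelation[OF fin n that, of \<rho> \<xi>] x0(2) by auto
  define x' where "x' = (\<lambda>(\<theta>,i). (\<Sum>\<pi>\<in>{\<pi>. \<pi> permutes {..<n}}. x0 (\<theta> \<circ> \<pi>, inv \<pi> i)) / card {\<pi>. \<pi> permutes {..<n}})"
  have x'D: "x' \<in> Dset n q \<rho>" and ox': "obj n q \<xi> x' = obj n q \<xi> x0"
    and x'sym: "\<And>\<theta> \<sigma> i. \<sigma> permutes {..<n} \<Longrightarrow> x' (\<theta> \<circ> inv \<sigma>, \<sigma> i) = x' (\<theta>, i)"
    using symmetrize(1)[OF sym x0(1)] symmetrize(2)[OF sym x0(1), where \<xi>=\<xi>] symmetrize(3)[OF sym x0(1)] unfolding x'_def by auto
  define \<phi> where "\<phi> = (\<lambda>\<theta>. embed_pmf (\<lambda>i. x' (\<theta>,i)))"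
  have el: "pmf (\<phi> \<theta>) = (\<lambda>i. x' (\<theta>,i))" "set_pmf (\<phi> \<theta>) \<subseteq> {..<n}" for \<theta>
  proof -
    have a: "\<forall>i. 0 \<le> x' (\<theta>,i)" "\<forall>i\<ge>n. x' (\<theta>,i) = 0" "(\<Sum>i<n. x' (\<theta>,i)) = 1"
      using x'D Dset_ge[OF x'D] by (auto simp: Dset_def)
    show "pmf (\<phi> \<theta>) = (\<lambda>i. x' (\<theta>,i))" "set_pmf (\<phi> \<theta>) \<subseteq> {..<n}"
      unfolding \<phi>_def using embed_lemma[OF a] by auto
  qed
  have pv: "post_val q f \<phi> s j = PV q f x' s j" for f s j
    unfolding post_val_def PV_def expect_fin[OF fin] el(1) ..
  have schphi: "is_scheme n \<phi>" using el(2) by (simp add: is_scheme_def)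
  have symphi: "symmetric_scheme n n \<phi>"
    unfolding symmetric_scheme_def direct_def using schphi x'sym by (simp add: el(1))
  have pers: "i < n \<Longrightarrow> j < n \<Longrightarrow> post_val q \<rho> \<phi> i j \<le> post_val q \<rho> \<phi> i i" for i j
    using x'D unfolding pv Dset_def by auto
  then have persphi: "persuasive n n q \<rho> \<phi>" by (simp add: persuasive_def)
  have fb: "finite (best_resp n q \<rho> \<phi> s)" for s
    by (rule finite_subset[of _ "{..<n}"]) (auto simp: best_resp_def)
  have lower: "obj n q \<xi> x' \<le> sender_util n n q \<rho> \<xi> \<phi>"
    unfolding obj_def sender_util_def
  proof (intro sum_mono)
    fix s assume "s \<in> {..<n}"
    then have "s \<in> best_resp n q \<rho> \<phi> s" using pers by (auto simp: best_resp_def)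
    then show "PV q \<xi> x' s s \<le> Max (post_val q \<xi> \<phi> s ` best_resp n q \<rho> \<phi> s)"
      using fb by (subst pv[symmetric]) (intro Max_ge; auto)
  qed
  have Sne: "{\<psi>. is_scheme n \<psi>} \<noteq> {}" using sch0 by blast
  have bdd: "bdd_above ((\<lambda>\<psi>. sender_util n n q \<rho> \<xi> \<psi>) ` {\<psi>. is_scheme n \<psi>})"
    using bound by (intro bdd_aboveI[where M="obj n q \<xi> x0"]) auto
  have "OPT n n q \<rho> \<xi> \<le> obj n q \<xi> x0" unfolding OPT_def
    using Sne bound by (intro cSUP_least) auto
  moreover have "sender_util n n q \<rho> \<xi> \<phi> \<le> OPT n n q \<rho> \<xi>" unfolding OPT_def
    using schphi bdd by (intro cSUP_upper) auto
  ultimately have "sender_util n n q \<rho> \<xi> \<phi> = OPT n n q \<rho> \<xi>" using lower ox' by linarith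
  then show ?thesis using symphi persphi by blast
qed



lemma ineq1:
  fixes A B c k :: real
  assumes "B \<le> A" "1 \<le> k"
  shows "B + (A + (c - 1) * B) / k \<le> A + c * B / k"
proof -
  have "(A + (c - 1) * B) / k = A / k - B / k + c * B / k" using assms by (simp add: field_simps)
  moreover have "(A - B) / k \<le> A - B" using assms by (simp add: divide_le_eq mult_le_cancel_left1 )
  ultimately show ?thesis by (simp add: diff_divide_distrib)
qed

lemma imitation_pmf:
  assumes "set_pmf (\<phi> \<theta>) \<subseteq> {..<n}" "2 \<le> k" "k \<le> n"
  shows "pmf (imitation k \<phi> \<theta>) i =
    (if i < k then pmf (\<phi> \<theta>) i + (\<Sum>m\<in>{k..<n}. pmf (\<phi> \<theta>) m) / k else 0)"
proof -
  let ?g = "\<lambda>m::nat. if m < k then return_pmf m else pmf_of_set {..<k}"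
  have "0 \<in> {..<k}" using assms(2) by simp
  then have kne: "{..<k} \<noteq> {}" by blast
  have "pmf (imitation k \<phi> \<theta>) i = (\<Sum>m\<in>{..<n}. pmf (?g m) i * pmf (\<phi> \<theta>) m)"
    unfolding imitation_def pmf_bind
    by (rule integral_measure_pmf_real) (use assms(1) in auto)
  also have "\<dots> = (\<Sum>m\<in>{0..<k}. pmf (?g m) i * pmf (\<phi> \<theta>) m) + (\<Sum>m\<in>{k..<n}. pmf (?g m) i * pmf (\<phi> \<theta>) m)"
    by (subst lessThan_atLeast0, rule sum.atLeastLessThan_concat[symmetric]) (use assms in auto)
  also have "(\<Sum>m\<in>{0..<k}. pmf (?g m) i * pmf (\<phi> \<theta>) m) = (\<Sum>m\<in>{0..<k}. (if m = i then pmf (\<phi> \<theta>) m else 0))"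
    by (intro sum.cong refl) (auto simp: pmf_return)
  also have "\<dots> = (if i < k then pmf (\<phi> \<theta>) i else 0)"
    by (simp add: sum.delta)
  also have "(\<Sum>m\<in>{k..<n}. pmf (?g m) i * pmf (\<phi> \<theta>) m) = (\<Sum>m\<in>{k..<n}. (if i < k then 1 / k else 0) * pmf (\<phi> \<theta>) m)"
    using kne by (intro sum.cong refl) (auto simp: indicator_def)
  finally show ?thesis by (auto simp: sum_distrib_left[symmetric])
qed

lemma sig0_post_val:
  assumes fin: "finite (set_pmf q)" and "sig_prob q \<phi> s = 0"
  shows "post_val q f \<phi> s j = 0"
proof -
  have "(\<Sum>\<theta>\<in>set_pmf q. pmf q \<theta> * pmf (\<phi> \<theta>) s) = 0"
    using assms unfolding sig_prob_def expect_fin[OF fin] by simp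
  then have "\<forall>\<theta>\<in>set_pmf q. pmf q \<theta> * pmf (\<phi> \<theta>) s = 0"
    using fin by (subst (asm) sum_nonneg_eq_0_iff) auto
  then show ?thesis unfolding post_val_def expect_fin[OF fin] by (intro sum.neutral) auto
qed



lemma part2:
  assumes sym: "symmetric_instance n q" and xi: "\<forall>t. \<xi> t \<ge> 0"
    and k2: "2 \<le> k" and kn: "k \<le> n"
    and sphi: "symmetric_scheme n n \<phi>" and pphi: "persuasive n n q \<rho> \<phi>"
    and opt: "sender_util n n q \<rho> \<xi> \<phi> = OPT n n q \<rho> \<xi>"
  shows "symmetric_scheme n k (imitation k \<phi>) \<and> direct n k (imitation k \<phi>) \<and>
              persuasive n k q \<rho> (imitation k \<phi>) \<and>
              sender_util n k q \<rho> \<xi> (imitation k \<phi>) \<ge> real k / real n * OPT n n q \<rho> \<xi>"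
proof -
  let ?\<psi> = "imitation k \<phi>"
  have fin: "finite (set_pmf q)" using sym by (simp add: symmetric_instance_def)
  have setphi: "set_pmf (\<phi> \<theta>) \<subseteq> {..<n}" for \<theta>
    using sphi by (simp add: symmetric_scheme_def direct_def is_scheme_def)
  have phisym: "\<pi> permutes {..<n} \<Longrightarrow> i < n \<Longrightarrow> pmf (\<phi> (\<theta> \<circ> inv \<pi>)) (\<pi> i) = pmf (\<phi> \<theta>) i" for \<pi> i \<theta>
    using sphi permutes_image[of \<pi> "{..<n}"] unfolding symmetric_scheme_def by blast
  have ipmf: "pmf (?\<psi> \<theta>) i = (if i < k then pmf (\<phi> \<theta>) i + (\<Sum>m\<in>{k..<n}. pmf (\<phi> \<theta>) m) / k else 0)" for \<theta> i
    by (rule imitation_pmf[of \<phi> \<theta> n k, OF setphi[of \<theta>] k2 kn])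
  have pvs: "post_val q f \<psi> s j = (\<Sum>\<theta>\<in>set_pmf q. pmf q \<theta> * (pmf (\<psi> \<theta>) s * f (\<theta> j)))" for f \<psi> s j
    unfolding post_val_def by (rule expect_fin[OF fin])
  have pv_perm: "post_val q f \<phi> (\<pi> s) (\<pi> j) = post_val q f \<phi> s j" if p: "\<pi> permutes {..<n}" and s: "s < n" for f \<pi> s j
  proof -
    have ip: "inv \<pi> permutes {..<n}" using p by (rule permutes_inv)
    show ?thesis unfolding pvs
      using sym_sum[OF sym ip, of "\<lambda>\<theta>. pmf (\<phi> \<theta>) (\<pi> s) * f (\<theta> (\<pi> j))"]
      by (simp add: phisym[OF p s] permutes_inverses(2)[OF p] permutes_inv_inv[OF p])
  qed
  define A where "A f = post_val q f \<phi> 0 0" for f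
  define B where "B f = post_val q f \<phi> 0 1" for f
  have n2: "2 \<le> n" using k2 kn by simp
  have diag: "post_val q f \<phi> s s = A f" if "s < n" for f s
  proof -
    have p: "Transposition.transpose 0 s permutes {..<n}" using that n2 by (intro permutes_swap_id) auto
    show ?thesis using pv_perm[OF p, of 0 f 0] n2 unfolding A_def by simp
  qed
  have off: "post_val q f \<phi> s j = B f" if "s < n" "j < n" "s \<noteq> j" for f s j
  proof -
    define \<pi>1 where "\<pi>1 = Transposition.transpose 0 s"
    define \<pi>2 where "\<pi>2 = Transposition.transpose (\<pi>1 1) j"
    have p1: "\<pi>1 permutes {..<n}" unfolding \<pi>1_def using that n2 by (intro permutes_swap_id) auto
    have "\<pi>1 1 < n" using p1 n2 permutes_in_image[OF p1, of 1] by simp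
    then have p2: "\<pi>2 permutes {..<n}" unfolding \<pi>2_def using that by (intro permutes_swap_id) auto
    have p: "\<pi>2 \<circ> \<pi>1 permutes {..<n}" using p1 p2 by (rule permutes_compose)
    have "\<pi>1 0 = s" unfolding \<pi>1_def by simp
    moreover have "\<pi>1 1 \<noteq> s" unfolding \<pi>1_def by (auto simp: Transposition.transpose_def)
    ultimately have "(\<pi>2 \<circ> \<pi>1) 0 = s" "(\<pi>2 \<circ> \<pi>1) 1 = j" unfolding \<pi>2_def using that by (auto simp: Transposition.transpose_def)
    then show ?thesis using pv_perm[OF p, of 0 f 1] n2 unfolding B_def by simp
  qed
  define c where "c = real n - real k"
  have c0: "0 \<le> c" using kn by (simp add: c_def)
  have kpos: "(1::real) \<le> real k" using k2 by simp
  have pvi: "post_val q f ?\<psi> i j = post_val q f \<phi> i j + (\<Sum>m\<in>{k..<n}. post_val q f \<phi> m j) / k" if "i < k" for f i j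
    unfolding pvs ipmf using that
    apply (simp add: sum_divide_distrib sum_distrib_left sum_distrib_right algebra_simps flip: sum.distrib)
    apply (simp add: sum.distrib)
    by (rule sum.swap)
  have tail: "(\<Sum>m\<in>{k..<n}. post_val q f \<phi> m j) = (if k \<le> j then A f + (c - 1) * B f else c * B f)"
    if j: "j < n" for f j
  proof -
    have "(\<Sum>m\<in>{k..<n}. post_val q f \<phi> m j) = (\<Sum>m\<in>{k..<n}. if m = j then A f else B f)"
      using diag off j by (intro sum.cong refl) auto
    also have "\<dots> = (if k \<le> j then A f + (c - 1) * B f else c * B f)"
    proof (cases "k \<le> j")
      case True
      then have jin: "j \<in> {k..<n}" using j by simp
      have "(\<Sum>m\<in>{k..<n}. if m = j then A f else B f) = A f + (\<Sum>m\<in>{k..<n} - {j}. if m = j then A f else B f)"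
        by (subst sum.remove[OF _ jin]) auto
      also have "\<dots> = A f + (\<Sum>m\<in>{k..<n} - {j}. B f)" by (intro arg_cong2[where f="(+)"] sum.cong) auto
      also have "\<dots> = A f + (c - 1) * B f" using jin kn by (simp add: c_def of_nat_diff)
      finally show ?thesis using True by simp
    next
      case False
      then have "(\<Sum>m\<in>{k..<n}. if m = j then A f else B f) = (\<Sum>m\<in>{k..<n}. B f)" by (intro sum.cong) auto
      then show ?thesis using False kn by (simp add: c_def of_nat_diff)
    qed
    finally show ?thesis .
  qed
  have V: "post_val q f ?\<psi> i j = (if j = i then A f + c * B f / k else if j < k then B f + c * B f / k
      else B f + (A f + (c - 1) * B f) / k)" if "i < k" "j < n" for f i j
    using that kn by (auto simp: pvi tail diag off)
  have sig_nn: "0 \<le> sig_prob q \<phi> 0"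
    unfolding sig_prob_def expect_fin[OF fin] by (intro sum_nonneg mult_nonneg_nonneg) auto
  have AB: "B \<rho> \<le> A \<rho>"
  proof (cases "sig_prob q \<phi> 0 > 0")
    case True
    then show ?thesis using pphi n2 unfolding persuasive_def A_def B_def by auto
  next
    case False
    then have "sig_prob q \<phi> 0 = 0" using sig_nn by linarith
    then show ?thesis unfolding A_def B_def using sig0_post_val[OF fin] by simp
  qed
  have persi: "post_val q \<rho> ?\<psi> i j \<le> post_val q \<rho> ?\<psi> i i" if "i < k" "j < n" for i j
    using that V[OF that, of \<rho>] V[of i i \<rho>] AB ineq1[OF AB kpos, of c] kn
    by (auto simp: add_divide_distrib)
  have Bnn: "0 \<le> B \<xi>"
    unfolding B_def pvs using xi by (intro sum_nonneg mult_nonneg_nonneg) auto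
  have setpsi: "set_pmf (?\<psi> \<theta>) \<subseteq> {..<k}" for \<theta>
    by (auto simp: set_pmf_iff ipmf split: if_splits)
  have dir: "direct n k ?\<psi>" using kn setpsi by (simp add: direct_def is_scheme_def)
  have ssym: "symmetric_scheme n k ?\<psi>"
    unfolding symmetric_scheme_def
  proof (intro conjI dir allI impI)
    fix \<theta> \<pi> i assume a: "\<pi> permutes {..<n} \<and> \<pi> ` {..<k} = {..<k} \<and> i < k"
    then have p: "\<pi> permutes {..<n}" and pk: "\<pi> ` {..<k} = {..<k}" and i: "i < k" by auto
    have pik: "\<pi> i < k" using pk i by auto
    have img: "\<pi> ` {k..<n} = {k..<n}"
    proof -
      have e: "{k..<n} = {..<n} - {..<k}" by auto
      have "\<pi> ` {k..<n} = \<pi> ` {..<n} - \<pi> ` {..<k}"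
        unfolding e by (rule image_set_diff[OF permutes_inj[OF p]])
      then show ?thesis using pk permutes_image[OF p] by auto
    qed
    have "(\<Sum>m\<in>{k..<n}. pmf (\<phi> (\<theta> \<circ> inv \<pi>)) m) = (\<Sum>m\<in>\<pi> ` {k..<n}. pmf (\<phi> (\<theta> \<circ> inv \<pi>)) m)"
      by (simp add: img)
    also have "\<dots> = (\<Sum>m\<in>{k..<n}. pmf (\<phi> (\<theta> \<circ> inv \<pi>)) (\<pi> m))"
      by (rule sum.reindex[unfolded comp_def]) (meson inj_on_subset permutes_inj[OF p] subset_UNIV)
    also have "\<dots> = (\<Sum>m\<in>{k..<n}. pmf (\<phi> \<theta>) m)"
      by (intro sum.cong refl phisym[OF p]) auto
    finally show "pmf (?\<psi> (\<theta> \<circ> inv \<pi>)) (\<pi> i) = pmf (?\<psi> \<theta>) i"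
      using i pik kn by (simp add: ipmf phisym[OF p])
  qed
  have ppsi: "persuasive n k q \<rho> ?\<psi>" using persi by (simp add: persuasive_def)
  define M where "M = (if B \<rho> < A \<rho> then A \<xi> else max (A \<xi>) (B \<xi>))"
  have upper: "Max (post_val q \<xi> \<phi> s ` best_resp n q \<rho> \<phi> s) \<le> M" if s: "s < n" for s
  proof -
    have fb: "finite (best_resp n q \<rho> \<phi> s)"
      by (rule finite_subset[of _ "{..<n}"]) (auto simp: best_resp_def)
    have "post_val q \<rho> \<phi> s j \<le> post_val q \<rho> \<phi> s s" if "j < n" for j
      using s that AB diag[OF s] off[OF s that] by (cases "j = s") auto
    then have "s \<in> best_resp n q \<rho> \<phi> s" using s unfolding best_resp_def by auto
    moreover have "post_val q \<xi> \<phi> s j \<le> M" if "j \<in> best_resp n q \<rho> \<phi> s" for j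
    proof -
      have j: "j < n" "post_val q \<rho> \<phi> s s \<le> post_val q \<rho> \<phi> s j"
        using that s by (auto simp: best_resp_def)
      show ?thesis
      proof (cases "j = s")
        case True then show ?thesis using diag s by (auto simp: M_def)
      next
        case False
        then show ?thesis using j diag[OF s] off[OF s j(1)] by (auto simp: M_def)
      qed
    qed
    ultimately show ?thesis using fb by (subst Max_le_iff) auto
  qed
  have lower: "M \<le> Max (post_val q \<xi> ?\<psi> i ` best_resp n q \<rho> ?\<psi> i)" if i: "i < k" for i
  proof -
    have fb: "finite (best_resp n q \<rho> ?\<psi> i)"
      by (rule finite_subset[of _ "{..<n}"]) (auto simp: best_resp_def)
    have ii: "i \<in> best_resp n q \<rho> ?\<psi> i" using i kn persi unfolding best_resp_def by auto
    have in_: "i < n" using i kn by simp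
    have cB: "0 \<le> c * B \<xi> / k" using c0 Bnn by simp
    have a1: "A \<xi> \<le> Max (post_val q \<xi> ?\<psi> i ` best_resp n q \<rho> ?\<psi> i)"
    proof -
      have "A \<xi> \<le> post_val q \<xi> ?\<psi> i i" using V[OF i in_, of \<xi>] cB by simp
      also have "\<dots> \<le> Max (post_val q \<xi> ?\<psi> i ` best_resp n q \<rho> ?\<psi> i)" using ii fb by (intro Max_ge) auto
      finally show ?thesis .
    qed
    show ?thesis
    proof (cases "B \<rho> < A \<rho>")
      case True then show ?thesis using a1 by (simp add: M_def)
    next
      case False
      then have eq: "A \<rho> = B \<rho>" using AB by simp
      define j0 where "j0 = (if i = 0 then 1 else (0::nat))"
      have j0: "j0 < k" "j0 \<noteq> i" "j0 < n" using k2 kn by (auto simp: j0_def)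
      have "j0 \<in> best_resp n q \<rho> ?\<psi> i" unfolding best_resp_def
        using j0 persi[OF i] V[OF i j0(3), of \<rho>] V[OF i in_, of \<rho>] eq by auto
      then have "post_val q \<xi> ?\<psi> i j0 \<le> Max (post_val q \<xi> ?\<psi> i ` best_resp n q \<rho> ?\<psi> i)"
        using fb by (intro Max_ge) auto
      moreover have "B \<xi> \<le> post_val q \<xi> ?\<psi> i j0" using V[OF i j0(3), of \<xi>] j0 cB by simp
      ultimately show ?thesis using a1 False by (simp add: M_def)
    qed
  qed
  have u: "sender_util n n q \<rho> \<xi> \<phi> \<le> real n * M"
    unfolding sender_util_def using sum_bounded_above[of "{..<n}" _ M] upper by auto
  have l: "real k * M \<le> sender_util n k q \<rho> \<xi> ?\<psi>"
    unfolding sender_util_def using sum_bounded_below[of "{..<k}" M] lower by auto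
  have "real k / real n * OPT n n q \<rho> \<xi> \<le> real k / real n * (real n * M)"
    unfolding opt[symmetric] by (rule mult_left_mono[OF u]) simp
  also have "\<dots> = real k * M" using n2 by simp
  finally have "real k / real n * OPT n n q \<rho> \<xi> \<le> sender_util n k q \<rho> \<xi> ?\<psi>" using l by linarith
  then show ?thesis using ssym dir ppsi by simp
qed


lemma ro_sym:
  assumes n: "0 < n"
  shows "symmetric_instance n (random_order n t)"
proof -
  let ?P = "{\<pi>. \<pi> permutes {..<n}}"
  let ?U = "pmf_of_set ?P"
  have fP: "finite ?P" by (rule finite_permutations) simp
  have neP: "?P \<noteq> {}" using permutes_id by blast
  have inv: "map_pmf (\<lambda>\<theta>. \<theta> \<circ> inv \<sigma>) (random_order n t) = random_order n t" if s: "\<sigma> permutes {..<n}" for \<sigma>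
  proof -
    have "map_pmf (\<lambda>\<theta>. \<theta> \<circ> inv \<sigma>) (random_order n t) = map_pmf (\<lambda>\<pi>. t \<circ> inv (\<sigma> \<circ> \<pi>)) ?U"
      unfolding random_order_def map_pmf_comp
    proof (intro map_pmf_cong refl)
      fix \<pi> assume "\<pi> \<in> set_pmf ?U"
      then have p: "\<pi> permutes {..<n}" using fP neP by simp
      have "inv (\<sigma> \<circ> \<pi>) = inv \<pi> \<circ> inv \<sigma>"
        by (rule o_inv_distrib) (use s p in \<open>auto intro: permutes_bij\<close>)
      then show "t \<circ> inv \<pi> \<circ> inv \<sigma> = t \<circ> inv (\<sigma> \<circ> \<pi>)" by (simp add: o_assoc)
    qed
    also have "\<dots> = map_pmf (\<lambda>\<pi>. t \<circ> inv \<pi>) (map_pmf (\<lambda>\<pi>. \<sigma> \<circ> \<pi>) ?U)"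
      by (simp add: map_pmf_comp)
    also have "map_pmf (\<lambda>\<pi>. \<sigma> \<circ> \<pi>) ?U = pmf_of_set ((\<lambda>\<pi>. \<sigma> \<circ> \<pi>) ` ?P)"
    proof (rule map_pmf_of_set_inj[OF _ neP fP])
      show "inj_on ((\<circ>) \<sigma>) ?P"
        by (metis (no_types, lifting) inj_onI o_assoc permutes_inv_o(2) s comp_id id_comp)
    qed
    also have "(\<lambda>\<pi>. \<sigma> \<circ> \<pi>) ` ?P = ?P" using image_compose_permutations_left[OF s] by blast
    finally show ?thesis unfolding random_order_def .
  qed
  show ?thesis unfolding symmetric_instance_def
  proof (intro conjI allI impI)
    show "finite (set_pmf (random_order n t))" unfolding random_order_def using fP neP by simp
    fix \<theta> :: "nat \<Rightarrow> 'a" and \<sigma> assume s: "\<sigma> permutes {..<n}"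
    have "inj (\<lambda>\<theta>::nat \<Rightarrow> 'a. \<theta> \<circ> inv \<sigma>)"
    proof (rule injI)
      fix a b :: "nat \<Rightarrow> 'a" assume "a \<circ> inv \<sigma> = b \<circ> inv \<sigma>"
      then have "a \<circ> inv \<sigma> \<circ> \<sigma> = b \<circ> inv \<sigma> \<circ> \<sigma>" by simp
      then show "a = b" by (simp add: o_assoc[symmetric] permutes_inv_o(2)[OF s])
    qed
    from pmf_map_inj'[OF this, of "random_order n t" \<theta>] inv[OF s]
    show "pmf (random_order n t) (\<theta> \<circ> inv \<sigma>) = pmf (random_order n t) \<theta>" by simp
  qed
qed

lemma ro_support:
  assumes "\<theta> \<in> set_pmf (random_order n t)"
  obtains \<pi> where "\<pi> permutes {..<n}" "\<theta> = t \<circ> inv \<pi>"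
proof -
  have fP: "finite {\<pi>. \<pi> permutes {..<n}}" by (rule finite_permutations) simp
  have neP: "{\<pi>. \<pi> permutes {..<n}} \<noteq> {}" using permutes_id by blast
  show ?thesis using assms fP neP that unfolding random_order_def by auto
qed



lemma part3:
  assumes k1: "1 \<le> k" and kn: "k \<le> n"
  shows "\<exists>(t :: nat \<Rightarrow> real) (\<rho>' :: real \<Rightarrow> real) (\<xi>' :: real \<Rightarrow> real).
               (\<forall>x. \<xi>' x \<ge> 0) \<and> OPT n n (random_order n t) \<rho>' \<xi>' > 0 \<and>
               OPT n k (random_order n t) \<rho>' \<xi>' \<le> real k / real n * OPT n n (random_order n t) \<rho>' \<xi>'"
proof -
  define t :: "nat \<Rightarrow> real" where "t = (\<lambda>i. if i = 0 then 1 else 0)"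
  define q where "q = random_order n t"
  define \<rho>' :: "real \<Rightarrow> real" where "\<rho>' = (\<lambda>_. 0)"
  define \<xi>' :: "real \<Rightarrow> real" where "\<xi>' = abs"
  have n: "0 < n" using k1 kn by simp
  have sym: "symmetric_instance n q" unfolding q_def by (rule ro_sym[OF n])
  have fin: "finite (set_pmf q)" using sym by (simp add: symmetric_instance_def)
  have pvs: "post_val q f \<psi> s j = (\<Sum>\<theta>\<in>set_pmf q. pmf q \<theta> * (pmf (\<psi> \<theta>) s * f (\<theta> j)))" for f \<psi> s j
    unfolding post_val_def by (rule expect_fin[OF fin])
  have br: "best_resp n q \<rho>' \<psi> s = {..<n}" for \<psi> s
    unfolding best_resp_def pvs \<rho>'_def by auto
  define e where "e j = (\<Sum>\<theta>\<in>set_pmf q. pmf q \<theta> * \<bar>\<theta> j\<bar>)" for j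
  have sum1: "(\<Sum>j<n. \<bar>\<theta> j\<bar>) = 1" if "\<theta> \<in> set_pmf q" for \<theta>
  proof -
    have "\<theta> \<in> set_pmf (random_order n t)" using that by (simp add: q_def)
    then obtain \<pi> where p: "\<pi> permutes {..<n}" and th: "\<theta> = t \<circ> inv \<pi>" by (rule ro_support)
    have "(\<Sum>j<n. \<bar>\<theta> j\<bar>) = (\<Sum>j<n. \<bar>\<theta> (\<pi> j)\<bar>)" using sum.permute[OF p, of "\<lambda>j. \<bar>\<theta> j\<bar>"] by (simp add: o_def)
    also have "\<dots> = (\<Sum>j<n. t j)" unfolding th by (simp add: permutes_inverses(2)[OF p] t_def)
    also have "\<dots> = 1" using n by (simp add: t_def)
    finally show ?thesis .
  qed
  have e0: "e j = e 0" if "j < n" for j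
  proof -
    have p: "Transposition.transpose 0 j permutes {..<n}" using that n by (intro permutes_swap_id) auto
    show ?thesis unfolding e_def using sym_sum[OF sym p, of "\<lambda>\<theta>. \<bar>\<theta> j\<bar>"] by simp
  qed
  have "(\<Sum>j<n. e j) = (\<Sum>\<theta>\<in>set_pmf q. pmf q \<theta> * (\<Sum>j<n. \<bar>\<theta> j\<bar>))"
    unfolding e_def sum_distrib_left by (rule sum.swap)
  also have "\<dots> = (\<Sum>\<theta>\<in>set_pmf q. pmf q \<theta>)" using sum1 by simp
  also have "\<dots> = 1" using fin by (simp add: sum_pmf_eq_1)
  finally have "(\<Sum>j<n. e j) = 1" .
  moreover have "(\<Sum>j<n. e j) = (\<Sum>j<n. e 0)" by (rule sum.cong[OF refl e0]) simp
  ultimately have "real n * e 0 = 1" by simp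
  then have ej: "e j = 1 / real n" if "j < n" for j proof -
    have "e j = e 0" using e0[OF that] .
    then show ?thesis using \<open>real n * e 0 = 1\<close> n by (simp add: field_simps)
  qed
  have pvb: "post_val q \<xi>' \<psi> s j \<le> 1 / real n" if "j < n" for \<psi> s j
  proof -
    have "post_val q \<xi>' \<psi> s j \<le> e j" unfolding pvs e_def \<xi>'_def
      by (intro sum_mono mult_left_mono) (auto intro: mult_left_le_one_le pmf_le_1)
    then show ?thesis using ej[OF that] by simp
  qed
  have sub: "sender_util n m q \<rho>' \<xi>' \<psi> \<le> real m / real n" for m \<psi>
  proof -
    have "Max (post_val q \<xi>' \<psi> s ` {..<n}) \<le> 1 / real n" for s
      using pvb n by (subst Max_le_iff) auto
    then have "sender_util n m q \<rho>' \<xi>' \<psi> \<le> real m * (1 / real n)"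
      unfolding sender_util_def br using sum_bounded_above[of "{..<m}" _ "1 / real n"] by auto
    then show ?thesis by simp
  qed
  have Sne: "{\<psi>::(nat\<Rightarrow>real)\<Rightarrow>nat pmf. is_scheme m \<psi>} \<noteq> {}" if "0 < m" for m :: nat
  proof -
    have "is_scheme m (\<lambda>_::nat\<Rightarrow>real. return_pmf (0::nat))" using that by (simp add: is_scheme_def)
    then show ?thesis by blast
  qed
  have optk: "OPT n k q \<rho>' \<xi>' \<le> real k / real n" unfolding OPT_def
  proof (rule cSUP_least)
    have "is_scheme k (\<lambda>_::nat\<Rightarrow>real. return_pmf (0::nat))" using k1 by (simp add: is_scheme_def)
    then show "{\<psi>::(nat\<Rightarrow>real)\<Rightarrow>nat pmf. is_scheme k \<psi>} \<noteq> {}" by blast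
    fix \<psi> show "sender_util n k q \<rho>' \<xi>' \<psi> \<le> real k / real n" by (rule sub)
  qed
  define c where "c \<theta> = (if \<exists>i<n. \<theta> i = (1::real) then (LEAST i. \<theta> i = 1) else 0)" for \<theta>
  have cn: "c \<theta> < n" for \<theta>
  proof (cases "\<exists>i<n. \<theta> i = 1")
    case True
    then obtain i where i: "i < n" "\<theta> i = 1" by blast
    then have "(LEAST i. \<theta> i = 1) \<le> i" by (intro Least_le)
    then show ?thesis using True i unfolding c_def by simp
  next
    case False
    have "c \<theta> = 0" unfolding c_def using False by (rule if_not_P)
    then show ?thesis using n by simp
  qed
  have c1: "\<theta> (c \<theta>) = 1" if "\<theta> \<in> set_pmf q" for \<theta>
  proof -
    have "\<theta> \<in> set_pmf (random_order n t)" using that by (simp add: q_def)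
    then obtain \<pi> where p: "\<pi> permutes {..<n}" and th: "\<theta> = t \<circ> inv \<pi>" by (rule ro_support)
    have "\<pi> 0 < n" using permutes_in_image[OF p, of 0] n by simp
    moreover have "\<theta> (\<pi> 0) = 1" unfolding th by (simp add: permutes_inverses(2)[OF p] t_def)
    ultimately have "\<exists>i<n. \<theta> i = 1" by blast
    then show ?thesis unfolding c_def by (auto intro: LeastI_ex)
  qed
  define \<phi>0 where "\<phi>0 = (\<lambda>\<theta>. return_pmf (c \<theta>))"
  have sch: "is_scheme n \<phi>0" using cn by (simp add: is_scheme_def \<phi>0_def)
  have "1 \<le> sender_util n n q \<rho>' \<xi>' \<phi>0"
  proof -
    have "(\<Sum>s<n. post_val q \<xi>' \<phi>0 s s) = (\<Sum>\<theta>\<in>set_pmf q. pmf q \<theta> * (\<Sum>s<n. of_bool (c \<theta> = s) * \<bar>\<theta> s\<bar>))"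
      unfolding pvs \<phi>0_def \<xi>'_def sum_distrib_left by (subst sum.swap) (simp add: pmf_return indicator_def)
    also have "\<dots> = (\<Sum>\<theta>\<in>set_pmf q. pmf q \<theta>)"
    proof (intro sum.cong refl)
      fix \<theta> assume th: "\<theta> \<in> set_pmf q"
      have "(\<Sum>s<n. of_bool (c \<theta> = s) * \<bar>\<theta> s\<bar>) = \<bar>\<theta> (c \<theta>)\<bar>"
      proof -
        have "(\<Sum>s<n. of_bool (c \<theta> = s) * \<bar>\<theta> s\<bar>) = (\<Sum>s\<in>{..<n}. if c \<theta> = s then \<bar>\<theta> s\<bar> else 0)"
          by (intro sum.cong) auto
        also have "\<dots> = \<bar>\<theta> (c \<theta>)\<bar>" using cn[of \<theta>] by (subst sum.delta') auto
        finally show ?thesis .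
      qed
      then show "pmf q \<theta> * (\<Sum>s<n. of_bool (c \<theta> = s) * \<bar>\<theta> s\<bar>) = pmf q \<theta>" using c1[OF th] by simp
    qed
    also have "\<dots> = 1" using fin by (simp add: sum_pmf_eq_1)
    finally have "(\<Sum>s<n. post_val q \<xi>' \<phi>0 s s) = 1" .
    moreover have "(\<Sum>s<n. post_val q \<xi>' \<phi>0 s s) \<le> sender_util n n q \<rho>' \<xi>' \<phi>0"
      unfolding sender_util_def br by (intro sum_mono Max_ge) auto
    ultimately show ?thesis by simp
  qed
  moreover have "sender_util n n q \<rho>' \<xi>' \<phi>0 \<le> OPT n n q \<rho>' \<xi>'" unfolding OPT_def
    using sch sub[of n] n by (intro cSUP_upper bdd_aboveI[where M="real n / real n"]) auto
  ultimately have optn: "1 \<le> OPT n n q \<rho>' \<xi>'" by linarith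
  have "real k / real n * 1 \<le> real k / real n * OPT n n q \<rho>' \<xi>'" using optn by (intro mult_left_mono) auto
  then have "OPT n k q \<rho>' \<xi>' \<le> real k / real n * OPT n n q \<rho>' \<xi>'" using optk by simp
  moreover have "\<forall>x. \<xi>' x \<ge> 0" by (simp add: \<xi>'_def)
  ultimately show ?thesis using optn unfolding q_def by (intro exI[of _ t] exI[of _ \<rho>'] exI[of _ \<xi>']) auto
qed

theorem proposition5p1:
  fixes n k :: nat and q :: "(nat \<Rightarrow> 'a) pmf" and \<rho> \<xi> :: "'a \<Rightarrow> real"
  assumes "symmetric_instance n q"
    and "\<forall>t. \<xi> t \<ge> 0"
    and "2 \<le> k" and "k \<le> n"
  shows "(\<exists>\<phi>. symmetric_scheme n n \<phi> \<and> persuasive n n q \<rho> \<phi> \<and>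
              sender_util n n q \<rho> \<xi> \<phi> = OPT n n q \<rho> \<xi>)
       \<and> (\<forall>\<phi>. symmetric_scheme n n \<phi> \<and> persuasive n n q \<rho> \<phi> \<and>
              sender_util n n q \<rho> \<xi> \<phi> = OPT n n q \<rho> \<xi> \<longrightarrow>
              symmetric_scheme n k (imitation k \<phi>) \<and> direct n k (imitation k \<phi>) \<and>
              persuasive n k q \<rho> (imitation k \<phi>) \<and>
              sender_util n k q \<rho> \<xi> (imitation k \<phi>) \<ge> real k / real n * OPT n n q \<rho> \<xi>)
       \<and> (\<forall>n' k'. 2 \<le> k' \<and> k' \<le> n' \<longrightarrow>
            (\<exists>(t :: nat \<Rightarrow> real) (\<rho>' :: real \<Rightarrow> real) (\<xi>' :: real \<Rightarrow> real).
               (\<forall>x. \<xi>' x \<ge> 0) \<and> OPT n' n' (random_order n' t) \<rho>' \<xi>' > 0 \<and>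
               OPT n' k' (random_order n' t) \<rho>' \<xi>' \<le> real k' / real n' * OPT n' n' (random_order n' t) \<rho>' \<xi>'))"
  proof -
  have n0: "0 < n" using assms(3,4) by simp
  have c1: "\<exists>\<phi>. symmetric_scheme n n \<phi> \<and> persuasive n n q \<rho> \<phi> \<and>
              sender_util n n q \<rho> \<xi> \<phi> = OPT n n q \<rho> \<xi>"
    by (rule part1[OF assms(1) n0])
  have c2: "\<forall>\<phi>. symmetric_scheme n n \<phi> \<and> persuasive n n q \<rho> \<phi> \<and>
              sender_util n n q \<rho> \<xi> \<phi> = OPT n n q \<rho> \<xi> \<longrightarrow>
              symmetric_scheme n k (imitation k \<phi>) \<and> direct n k (imitation k \<phi>) \<and>
              persuasive n k q \<rho> (imitation k \<phi>) \<and>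
              sender_util n k q \<rho> \<xi> (imitation k \<phi>) \<ge> real k / real n * OPT n n q \<rho> \<xi>"
    using part2[OF assms(1) assms(2) assms(3) assms(4)] by blast
  have c3: "\<forall>n' k'. 2 \<le> k' \<and> k' \<le> n' \<longrightarrow>
            (\<exists>(t :: nat \<Rightarrow> real) (\<rho>' :: real \<Rightarrow> real) (\<xi>' :: real \<Rightarrow> real).
               (\<forall>x. \<xi>' x \<ge> 0) \<and> OPT n' n' (random_order n' t) \<rho>' \<xi>' > 0 \<and>
               OPT n' k' (random_order n' t) \<rho>' \<xi>' \<le> real k' / real n' * OPT n' n' (random_order n' t) \<rho>' \<xi>')"
  proof (intro allI impI)
    fix n' k' :: nat assume "2 \<le> k' \<and> k' \<le> n'"
    then show "\<exists>(t :: nat \<Rightarrow> real) (\<rho>' :: real \<Rightarrow> real) (\<xi>' :: real \<Rightarrow> real).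
               (\<forall>x. \<xi>' x \<ge> 0) \<and> OPT n' n' (random_order n' t) \<rho>' \<xi>' > 0 \<and>
               OPT n' k' (random_order n' t) \<rho>' \<xi>' \<le> real k' / real n' * OPT n' n' (random_order n' t) \<rho>' \<xi>'"
      by (intro part3) auto
  qed
  show ?thesis using c1 c2 c3 by blast
qed

end
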